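(* Let $w\in W$ and $\beta_1,\dots,\beta_m\in\Phi^+$ with $\ell(s_{\beta_i}s_{\beta_{i-1}}\cdots s_{\beta_1}w)=\ell(w)-i$ for all $i=1,\dots,m$. Assume $(\beta_i,\beta_j)\ne0$ for some $i\ne j$ in $\{1,\dots,m\}$. Then there exist $\gamma_1,\dots,\gamma_m\in\Phi^+$ such that $\ell(s_{\gamma_i}\cdots s_{\gamma_1}w)=\ell(w)-i$ for all $i=1,\dots,m$, $s_{\gamma_m}\cdots s_{\gamma_1}w=s_{\beta_m}\cdots s_{\beta_1}w$, and $(\gamma_1,\gamma_2)\ne0$.
   Context: $\Phi$ is the (finite, crystallographic) root system of a complex semisimple Lie algebra, $\Phi^+$ its positive roots with respect to a fixed basis, $W$ the Weyl group with length function $\ell$, $(\cdot,\cdot)$ a $W$-invariant scalar product, and $s_\beta$ the reflection in $\beta$. *)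

theory Defs
  imports "HOL-Analysis.Analysis"
begin

definition refl :: "'a::euclidean_space \<Rightarrow> 'a \<Rightarrow> 'a" where
  "refl a x = x - ((2 * (x \<bullet> a)) / (a \<bullet> a)) *\<^sub>R a"

definition root_system :: "'a::euclidean_space set \<Rightarrow> bool" where
  "root_system \<Phi> \<longleftrightarrow> finite \<Phi> \<and> 0 \<notin> \<Phi> \<and> span \<Phi> = UNIV
     \<and> (\<forall>a\<in>\<Phi>. refl a ` \<Phi> \<subseteq> \<Phi>)
     \<and> (\<forall>a\<in>\<Phi>. \<forall>b\<in>\<Phi>. 2 * (a \<bullet> b) / (b \<bullet> b) \<in> \<int>)
     \<and> (\<forall>a\<in>\<Phi>. \<forall>c::real. c *\<^sub>R a \<in> \<Phi> \<longrightarrow> c = 1 \<or> c = -1)"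

definition is_base :: "'a::euclidean_space set \<Rightarrow> 'a set \<Rightarrow> bool" where
  "is_base \<Phi> \<Delta> \<longleftrightarrow> \<Delta> \<subseteq> \<Phi> \<and> independent \<Delta>
     \<and> (\<forall>b\<in>\<Phi>. \<exists>c. b = (\<Sum>a\<in>\<Delta>. c a *\<^sub>R a) \<and> (\<forall>a\<in>\<Delta>. c a \<in> \<int>)
            \<and> ((\<forall>a\<in>\<Delta>. c a \<ge> 0) \<or> (\<forall>a\<in>\<Delta>. c a \<le> 0)))"

definition pos_roots :: "'a::euclidean_space set \<Rightarrow> 'a set \<Rightarrow> 'a set" where
  "pos_roots \<Phi> \<Delta> = {b\<in>\<Phi>. \<exists>c. b = (\<Sum>a\<in>\<Delta>. c a *\<^sub>R a) \<and> (\<forall>a\<in>\<Delta>. c a \<ge> 0)}"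

inductive_set weyl_group :: "'a::euclidean_space set \<Rightarrow> ('a \<Rightarrow> 'a) set" for \<Phi> where
  weyl_id: "id \<in> weyl_group \<Phi>"
| weyl_step: "w \<in> weyl_group \<Phi> \<Longrightarrow> a \<in> \<Phi> \<Longrightarrow> refl a \<circ> w \<in> weyl_group \<Phi>"

definition refl_word :: "'a::euclidean_space list \<Rightarrow> 'a \<Rightarrow> 'a" where
  "refl_word as = foldr (\<lambda>a f. refl a \<circ> f) as id"

definition weyl_length :: "'a::euclidean_space set \<Rightarrow> ('a \<Rightarrow> 'a) \<Rightarrow> nat" where
  "weyl_length \<Delta> w = (LEAST n. \<exists>as. length as = n \<and> set as \<subseteq> \<Delta> \<and> refl_word as = w)"

fun refl_prod :: "(nat \<Rightarrow> 'a::euclidean_space) \<Rightarrow> nat \<Rightarrow> 'a \<Rightarrow> 'a" where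
  "refl_prod b 0 = id"
| "refl_prod b (Suc i) = refl (b (Suc i)) \<circ> refl_prod b i"

end

theory Submission
  imports Defs
begin


lemma refl_apply: "refl a x = x - ((2 * (x \<bullet> a)) / (a \<bullet> a)) *\<^sub>R a"
  by (simp add: refl_def)

lemma refl_add: "refl a (x + y) = refl a x + refl a y"
  by (simp add: refl_def inner_add_left add_divide_distrib algebra_simps)

lemma refl_scale: "refl a (c *\<^sub>R x) = c *\<^sub>R refl a x"
  by (simp add: refl_def algebra_simps)

lemma refl_linear: "linear (refl a)"
  by (rule linearI) (simp_all add: refl_add refl_scale)

lemma refl_neg_arg: "refl a (- x) = - refl a x"
  using refl_scale[of a "-1" x] by simp

lemma refl_diff: "refl a (x - y) = refl a x - refl a y"
  by (metis diff_conv_add_uminus refl_add refl_neg_arg)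

lemma refl_inner: assumes "a \<noteq> 0" shows "refl a x \<bullet> refl a y = x \<bullet> y"
proof -
  have "a \<bullet> a \<noteq> 0" using assms by simp
  then show ?thesis
    by (simp add: refl_def inner_diff_left inner_diff_right inner_commute field_simps)
qed

lemma refl_self: assumes "a \<noteq> 0" shows "refl a a = - a"
  using assms by (simp add: refl_def algebra_simps scaleR_2)

lemma refl_orth: assumes "x \<bullet> a = 0" shows "refl a x = x"
  using assms by (simp add: refl_def)

lemma refl_refl: assumes "a \<noteq> 0" shows "refl a (refl a x) = x"
proof -
  have "a \<bullet> a \<noteq> 0" using assms by simp
  then show ?thesis by (simp add: refl_def inner_diff_left field_simps)
qed

lemma refl_comp_refl: assumes "a \<noteq> 0" shows "refl a \<circ> refl a = id"
  using refl_refl[OF assms] by auto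

lemma refl_uminus: "refl (- a) = refl a"
  by (rule ext) (simp add: refl_def)

lemma refl_scaleR_root: assumes "k \<noteq> 0" shows "refl (k *\<^sub>R a) = refl a"
proof (rule ext)
  fix x
  show "refl (k *\<^sub>R a) x = refl a x"
  proof (cases "a = 0")
    case True then show ?thesis by (simp add: refl_def)
  next
    case False
    then have "a \<bullet> a \<noteq> 0" by simp
    then show ?thesis using assms by (simp add: refl_def field_simps)
  qed
qed

lemma refl_conj:
  assumes "linear f" and "\<And>x y. f x \<bullet> f y = x \<bullet> y"
  shows "f (refl a x) = refl (f a) (f x)"
proof -
  have "f (refl a x) = f x - ((2 * (x \<bullet> a)) / (a \<bullet> a)) *\<^sub>R f a"
    by (simp add: refl_def linear_diff[OF assms(1)] linear_scale[OF assms(1)])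
  also have "\<dots> = refl (f a) (f x)" by (simp add: refl_def assms(2))
  finally show ?thesis .
qed

lemma refl_orth_comm:
  assumes "a \<bullet> b = 0" shows "refl a (refl b x) = refl b (refl a x)"
  using assms by (simp add: refl_def inner_diff_left inner_commute algebra_simps)

lemma refl_word_Nil[simp]: "refl_word [] = id" by (simp add: refl_word_def)
lemma refl_word_Cons[simp]: "refl_word (a # as) = refl a \<circ> refl_word as"
  by (simp add: refl_word_def)
lemma refl_word_append: "refl_word (as @ bs) = refl_word as \<circ> refl_word bs"
  by (induction as) auto

lemma refl_word_rev_inv:
  assumes "0 \<notin> set as" shows "refl_word (rev as) \<circ> refl_word as = id"
  using assms
proof (induction as)
  case Nil then show ?case by simp
next
  case (Cons a as)
  have "refl_word (rev (a # as)) \<circ> refl_word (a # as)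
      = refl_word (rev as) \<circ> (refl a \<circ> refl a) \<circ> refl_word as"
    by (simp add: refl_word_append comp_assoc)
  also have "\<dots> = refl_word (rev as) \<circ> refl_word as" using Cons.prems by (simp add: refl_comp_refl)
  also have "\<dots> = id" by (rule Cons.IH) (use Cons.prems in simp)
  finally show ?case .
qed

lemma refl_word_inv:
  assumes "0 \<notin> set as" shows "inv (refl_word as) = refl_word (rev as)"
proof (rule inv_unique_comp)
  show "refl_word (rev as) \<circ> refl_word as = id" by (rule refl_word_rev_inv[OF assms])
  have "refl_word (rev (rev as)) \<circ> refl_word (rev as) = id"
    by (rule refl_word_rev_inv) (use assms in simp)
  then show "refl_word as \<circ> refl_word (rev as) = id" by simp
qed

lemma refl_word_linear: "linear (refl_word as)"
proof (induction as)
  case Nil then show ?case using linear_id by (simp add: id_def)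
next
  case (Cons a as) then show ?case using linear_compose[OF Cons.IH refl_linear[of a]] by (simp add: o_def)
qed

lemma refl_word_inner: assumes "0 \<notin> set as" shows "refl_word as x \<bullet> refl_word as y = x \<bullet> y"
  using assms by (induction as arbitrary: x y) (auto simp: refl_inner)



locale RS =
  fixes \<Phi> \<Delta> :: "'a::euclidean_space set"
  assumes rs: "root_system \<Phi>" and bs: "is_base \<Phi> \<Delta>"
begin

lemma finPhi: "finite \<Phi>" using rs by (simp add: root_system_def)
lemma zero_notin: "0 \<notin> \<Phi>" using rs by (simp add: root_system_def)
lemma root_nz: "a \<in> \<Phi> \<Longrightarrow> a \<noteq> 0" using zero_notin by auto
lemma refl_closed: "a \<in> \<Phi> \<Longrightarrow> b \<in> \<Phi> \<Longrightarrow> refl a b \<in> \<Phi>"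
  using rs by (auto simp: root_system_def)
lemma cryst: "a \<in> \<Phi> \<Longrightarrow> b \<in> \<Phi> \<Longrightarrow> 2 * (a \<bullet> b) / (b \<bullet> b) \<in> \<int>"
  using rs by (simp add: root_system_def)
lemma reduced: "a \<in> \<Phi> \<Longrightarrow> c *\<^sub>R a \<in> \<Phi> \<Longrightarrow> c = 1 \<or> c = -1"
  using rs by (simp add: root_system_def)
lemma Delta_sub: "\<Delta> \<subseteq> \<Phi>" using bs by (simp add: is_base_def)
lemma indep: "independent \<Delta>" using bs by (simp add: is_base_def)
lemma finD: "finite \<Delta>" using Delta_sub finPhi finite_subset by blast
lemma base_rep: "b \<in> \<Phi> \<Longrightarrow> \<exists>c. b = (\<Sum>a\<in>\<Delta>. c a *\<^sub>R a) \<and> (\<forall>a\<in>\<Delta>. c a \<in> \<int>)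
            \<and> ((\<forall>a\<in>\<Delta>. c a \<ge> 0) \<or> (\<forall>a\<in>\<Delta>. c a \<le> 0))"
  using bs by (simp add: is_base_def)
lemma neg_closed: "a \<in> \<Phi> \<Longrightarrow> - a \<in> \<Phi>"
  using refl_closed[of a a] refl_self[of a] root_nz by auto

definition cone :: "'a \<Rightarrow> bool" where
  "cone v \<longleftrightarrow> (\<exists>c. v = (\<Sum>a\<in>\<Delta>. c a *\<^sub>R a) \<and> (\<forall>a\<in>\<Delta>. c a \<ge> 0))"

abbreviation P where "P \<equiv> pos_roots \<Phi> \<Delta>"

lemma P_iff: "v \<in> P \<longleftrightarrow> v \<in> \<Phi> \<and> cone v"
  by (simp add: pos_roots_def cone_def)

lemma P_root: "v \<in> P \<Longrightarrow> v \<in> \<Phi>" by (simp add: P_iff)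

lemma coeff_unique:
  assumes "(\<Sum>a\<in>\<Delta>. c a *\<^sub>R a) = (\<Sum>a\<in>\<Delta>. d a *\<^sub>R a)" "x \<in> \<Delta>"
  shows "c x = d x"
proof -
  have "(\<Sum>a\<in>\<Delta>. (c a - d a) *\<^sub>R a) = 0"
    using assms(1) by (simp add: scaleR_diff_left sum_subtractf)
  moreover have H: "\<forall>f. (\<Sum>v\<in>\<Delta>. f v *\<^sub>R v) = 0 \<longrightarrow> (\<forall>v\<in>\<Delta>. f v = 0)"
    using indep by (simp add: independent_explicit)
  ultimately have "\<forall>v\<in>\<Delta>. c v - d v = 0"
    using H[rule_format, of "\<lambda>a. c a - d a"] by blast
  then show ?thesis using assms(2) by auto
qed

lemma cone_add: "cone x \<Longrightarrow> cone y \<Longrightarrow> cone (x + y)"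
proof -
  assume "cone x" "cone y"
  then obtain c d where c: "x = (\<Sum>a\<in>\<Delta>. c a *\<^sub>R a)" "\<forall>a\<in>\<Delta>. c a \<ge> 0"
    and d: "y = (\<Sum>a\<in>\<Delta>. d a *\<^sub>R a)" "\<forall>a\<in>\<Delta>. d a \<ge> 0" by (auto simp: cone_def)
  have "x + y = (\<Sum>a\<in>\<Delta>. (c a + d a) *\<^sub>R a)" using c d by (simp add: scaleR_add_left sum.distrib)
  then show "cone (x + y)" unfolding cone_def using c d by (intro exI[of _ "\<lambda>a. c a + d a"]) auto
qed

lemma cone_scale: "cone x \<Longrightarrow> k \<ge> 0 \<Longrightarrow> cone (k *\<^sub>R x)"
proof -
  assume "cone x" "k \<ge> 0"
  then obtain c where c: "x = (\<Sum>a\<in>\<Delta>. c a *\<^sub>R a)" "\<forall>a\<in>\<Delta>. c a \<ge> 0" by (auto simp: cone_def)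
  have "k *\<^sub>R x = (\<Sum>a\<in>\<Delta>. (k * c a) *\<^sub>R a)" using c by (simp add: scaleR_sum_right)
  then show "cone (k *\<^sub>R x)" unfolding cone_def using c \<open>k \<ge> 0\<close>
    by (intro exI[of _ "\<lambda>a. k * c a"]) auto
qed

lemma cone_zero_only: "cone x \<Longrightarrow> cone (- x) \<Longrightarrow> x = 0"
proof -
  assume "cone x" "cone (- x)"
  then obtain c d where c: "x = (\<Sum>a\<in>\<Delta>. c a *\<^sub>R a)" "\<forall>a\<in>\<Delta>. c a \<ge> 0"
    and d: "- x = (\<Sum>a\<in>\<Delta>. d a *\<^sub>R a)" "\<forall>a\<in>\<Delta>. d a \<ge> 0" by (auto simp: cone_def)
  have "(\<Sum>a\<in>\<Delta>. (c a + d a) *\<^sub>R a) = (\<Sum>a\<in>\<Delta>. c a *\<^sub>R a) + (\<Sum>a\<in>\<Delta>. d a *\<^sub>R a)"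
    by (simp add: scaleR_add_left sum.distrib)
  also have "\<dots> = x + - x" using c(1) d(1) by simp
  also have "\<dots> = (\<Sum>a\<in>\<Delta>. 0 *\<^sub>R a)" by simp
  finally have "(\<Sum>a\<in>\<Delta>. (c a + d a) *\<^sub>R a) = (\<Sum>a\<in>\<Delta>. 0 *\<^sub>R a)" .
  then have "\<forall>a\<in>\<Delta>. c a + d a = 0" using coeff_unique[of "\<lambda>a. c a + d a" "\<lambda>a. 0"] by simp
  then have "\<forall>a\<in>\<Delta>. c a = 0" using c d by force
  then show "x = 0" using c by simp
qed

lemma root_cases: "r \<in> \<Phi> \<Longrightarrow> r \<in> P \<or> - r \<in> P"
proof -
  assume r: "r \<in> \<Phi>"
  obtain c where c: "r = (\<Sum>a\<in>\<Delta>. c a *\<^sub>R a)"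
    "(\<forall>a\<in>\<Delta>. c a \<ge> 0) \<or> (\<forall>a\<in>\<Delta>. c a \<le> 0)" using base_rep[OF r] by blast
  show ?thesis
  proof (cases "\<forall>a\<in>\<Delta>. c a \<ge> 0")
    case True then show ?thesis using r c by (auto simp: P_iff cone_def)
  next
    case False
    then have h1: "\<forall>a\<in>\<Delta>. - c a \<ge> 0" using c by auto
    have h2: "- r = (\<Sum>a\<in>\<Delta>. (- c a) *\<^sub>R a)" using c(1) by (simp add: sum_negf)
    have "cone (- r)" unfolding cone_def using h1 h2 by (intro exI[of _ "\<lambda>a. - c a"]) auto
    then show ?thesis using neg_closed[OF r] by (simp add: P_iff)
  qed
qed

lemma not_both: "r \<in> P \<Longrightarrow> - r \<in> P \<Longrightarrow> False"
  using cone_zero_only root_nz by (auto simp: P_iff)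

lemma pos_comb: "v \<in> \<Phi> \<Longrightarrow> v = x + k *\<^sub>R y \<Longrightarrow> x \<in> P \<Longrightarrow> y \<in> P \<Longrightarrow> k \<ge> 0 \<Longrightarrow> v \<in> P"
  by (auto simp: P_iff intro!: cone_add cone_scale)

lemma pos_scale: "v \<in> \<Phi> \<Longrightarrow> v = k *\<^sub>R y \<Longrightarrow> y \<in> P \<Longrightarrow> k > 0 \<Longrightarrow> v \<in> P"
  by (auto simp: P_iff intro!: cone_scale)

lemma pos_rep_int:
  assumes "b \<in> P"
  shows "\<exists>c. b = (\<Sum>a\<in>\<Delta>. c a *\<^sub>R a) \<and> (\<forall>a\<in>\<Delta>. c a \<in> \<int> \<and> c a \<ge> 0)"
proof -
  obtain c where c: "b = (\<Sum>a\<in>\<Delta>. c a *\<^sub>R a)" "\<forall>a\<in>\<Delta>. c a \<in> \<int>"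
    "(\<forall>a\<in>\<Delta>. c a \<ge> 0) \<or> (\<forall>a\<in>\<Delta>. c a \<le> 0)" using base_rep P_root[OF assms] by blast
  obtain d where d: "b = (\<Sum>a\<in>\<Delta>. d a *\<^sub>R a)" "\<forall>a\<in>\<Delta>. d a \<ge> 0"
    using assms by (auto simp: P_iff cone_def)
  have "(\<Sum>a\<in>\<Delta>. c a *\<^sub>R a) = (\<Sum>a\<in>\<Delta>. d a *\<^sub>R a)" using c(1) d(1) by simp
  then have "\<forall>a\<in>\<Delta>. c a = d a" using coeff_unique by blast
  then show ?thesis using c d by (intro exI[of _ c]) auto
qed

lemma simple_refl_pos:
  assumes al: "\<alpha> \<in> \<Delta>" and b: "\<beta> \<in> P" and ne: "\<beta> \<noteq> \<alpha>"
  shows "refl \<alpha> \<beta> \<in> P"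
proof -
  have alP: "\<alpha> \<in> \<Phi>" using al Delta_sub by auto
  have bP: "\<beta> \<in> \<Phi>" using b P_root by auto
  obtain c where c: "\<beta> = (\<Sum>a\<in>\<Delta>. c a *\<^sub>R a)" "\<forall>a\<in>\<Delta>. c a \<ge> 0"
    using b by (auto simp: P_iff cone_def)
  have split: "(\<Sum>a\<in>\<Delta>. c a *\<^sub>R a) = c \<alpha> *\<^sub>R \<alpha> + (\<Sum>a\<in>\<Delta>-{\<alpha>}. c a *\<^sub>R a)"
    using al finD by (simp add: sum.remove)
  have "\<exists>\<gamma>\<in>\<Delta>. \<gamma> \<noteq> \<alpha> \<and> c \<gamma> > 0"
  proof (rule ccontr)
    assume "\<not> ?thesis"
    then have "\<forall>a\<in>\<Delta>-{\<alpha>}. c a = 0" using c(2) by force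
    then have "\<beta> = c \<alpha> *\<^sub>R \<alpha>" using c(1) split by simp
    then have "c \<alpha> = 1 \<or> c \<alpha> = -1" using reduced[OF alP] bP by simp
    then have "c \<alpha> = 1" using c(2) al by auto
    then show False using \<open>\<beta> = c \<alpha> *\<^sub>R \<alpha>\<close> ne by simp
  qed
  then obtain \<gamma> where g: "\<gamma> \<in> \<Delta>" "\<gamma> \<noteq> \<alpha>" "c \<gamma> > 0" by blast
  define k where "k = 2 * (\<beta> \<bullet> \<alpha>) / (\<alpha> \<bullet> \<alpha>)"
  have e1: "(\<lambda>a. (if a = \<alpha> then k else 0) *\<^sub>R a) = (\<lambda>a. if a = \<alpha> then k *\<^sub>R \<alpha> else 0)"
    by auto
  have e2: "(\<Sum>a\<in>\<Delta>. (if a = \<alpha> then k else 0) *\<^sub>R a) = k *\<^sub>R \<alpha>"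
    unfolding e1 using finD al by (simp add: sum.delta)
  have e3: "(\<Sum>a\<in>\<Delta>. (c a - (if a = \<alpha> then k else 0)) *\<^sub>R a)
      = (\<Sum>a\<in>\<Delta>. c a *\<^sub>R a) - (\<Sum>a\<in>\<Delta>. (if a = \<alpha> then k else 0) *\<^sub>R a)"
    by (simp only: scaleR_diff_left sum_subtractf)
  have rb: "refl \<alpha> \<beta> = (\<Sum>a\<in>\<Delta>. (c a - (if a = \<alpha> then k else 0)) *\<^sub>R a)"
    unfolding e3 e2 c(1)[symmetric] by (simp add: refl_def k_def)
  have rP: "refl \<alpha> \<beta> \<in> \<Phi>" using refl_closed alP bP by auto
  show ?thesis
  proof (rule ccontr)
    assume "refl \<alpha> \<beta> \<notin> P"
    then have "- refl \<alpha> \<beta> \<in> P" using root_cases rP by blast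
    then obtain d where d: "- refl \<alpha> \<beta> = (\<Sum>a\<in>\<Delta>. d a *\<^sub>R a)" "\<forall>a\<in>\<Delta>. d a \<ge> 0"
      by (auto simp: P_iff cone_def)
    have "refl \<alpha> \<beta> = - (\<Sum>a\<in>\<Delta>. d a *\<^sub>R a)" using d(1) by (metis minus_minus)
    also have "\<dots> = (\<Sum>a\<in>\<Delta>. (- d a) *\<^sub>R a)" by (simp add: sum_negf)
    finally have "refl \<alpha> \<beta> = (\<Sum>a\<in>\<Delta>. (- d a) *\<^sub>R a)" .
    then have "(\<Sum>a\<in>\<Delta>. (c a - (if a = \<alpha> then k else 0)) *\<^sub>R a) = (\<Sum>a\<in>\<Delta>. (- d a) *\<^sub>R a)"
      using rb by simp
    then have "c \<gamma> - (if \<gamma> = \<alpha> then k else 0) = - d \<gamma>"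
      using coeff_unique[of "\<lambda>a. c a - (if a = \<alpha> then k else 0)" "\<lambda>a. - d a", OF _ g(1)] by simp
    then show False using g d(2) by auto
  qed
qed

end


context RS begin

definition Wf :: "('a \<Rightarrow> 'a) set" where "Wf = {refl_word as | as. set as \<subseteq> \<Phi>}"
definition Ws :: "('a \<Rightarrow> 'a) set" where "Ws = {refl_word as | as. set as \<subseteq> \<Delta>}"
abbreviation len where "len \<equiv> weyl_length \<Delta>"

lemma word_root: "set as \<subseteq> \<Phi> \<Longrightarrow> r \<in> \<Phi> \<Longrightarrow> refl_word as r \<in> \<Phi>"
  by (induction as arbitrary: r) (auto intro: refl_closed)

lemma word_nz: "set as \<subseteq> \<Phi> \<Longrightarrow> 0 \<notin> set as" using zero_notin by auto

lemma Wf_linear: "f \<in> Wf \<Longrightarrow> linear f" by (auto simp: Wf_def refl_word_linear)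
lemma Wf_inner: "f \<in> Wf \<Longrightarrow> f x \<bullet> f y = x \<bullet> y"
  by (auto simp: Wf_def intro!: refl_word_inner word_nz)
lemma Wf_root: "f \<in> Wf \<Longrightarrow> r \<in> \<Phi> \<Longrightarrow> f r \<in> \<Phi>" by (auto simp: Wf_def word_root)
lemma Wf_inv: "f \<in> Wf \<Longrightarrow> inv f \<in> Wf"
proof -
  assume "f \<in> Wf"
  then obtain as where f: "f = refl_word as" "set as \<subseteq> \<Phi>" by (auto simp: Wf_def)
  then have "inv f = refl_word (rev as)" using refl_word_inv word_nz by blast
  then show ?thesis using f unfolding Wf_def by (intro CollectI exI[of _ "rev as"]) auto
qed
lemma Wf_comp: "f \<in> Wf \<Longrightarrow> g \<in> Wf \<Longrightarrow> f \<circ> g \<in> Wf"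
proof -
  assume "f \<in> Wf" "g \<in> Wf"
  then obtain as bs where f: "f = refl_word as" "set as \<subseteq> \<Phi>" and g: "g = refl_word bs" "set bs \<subseteq> \<Phi>"
    by (auto simp: Wf_def)
  then have "f \<circ> g = refl_word (as @ bs)" by (simp add: refl_word_append)
  then show ?thesis using f g unfolding Wf_def by (intro CollectI exI[of _ "as @ bs"]) auto
qed
lemma Wf_refl: "a \<in> \<Phi> \<Longrightarrow> refl a \<in> Wf"
  unfolding Wf_def by (auto intro!: exI[of _ "[a]"])
lemma Wf_id: "id \<in> Wf" unfolding Wf_def by (auto intro!: exI[of _ "[]"])
lemma Wf_inv_comp: "f \<in> Wf \<Longrightarrow> g \<in> Wf \<Longrightarrow> inv (f \<circ> g) = inv g \<circ> inv f"
proof -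
  assume "f \<in> Wf" "g \<in> Wf"
  then obtain as bs where f: "f = refl_word as" "set as \<subseteq> \<Phi>" and g: "g = refl_word bs" "set bs \<subseteq> \<Phi>"
    by (auto simp: Wf_def)
  have "inv (f \<circ> g) = inv (refl_word (as @ bs))" by (simp add: f g refl_word_append)
  also have "\<dots> = refl_word (rev (as @ bs))" using f g by (intro refl_word_inv word_nz) auto
  also have "\<dots> = refl_word (rev bs @ rev as)" by simp
  also have "\<dots> = inv g \<circ> inv f" using f g by (simp add: refl_word_append refl_word_inv word_nz)
  finally show ?thesis .
qed
lemma Wf_inv_left: "f \<in> Wf \<Longrightarrow> inv f (f x) = x"
proof -
  assume "f \<in> Wf"
  then obtain as where f: "f = refl_word as" "set as \<subseteq> \<Phi>" by (auto simp: Wf_def)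
  have "(refl_word (rev as) \<circ> refl_word as) x = x" using refl_word_rev_inv[OF word_nz[OF f(2)]] by simp
  then show ?thesis using f by (simp add: refl_word_inv word_nz)
qed
lemma Wf_inv_right: "f \<in> Wf \<Longrightarrow> f (inv f x) = x"
proof -
  assume "f \<in> Wf"
  then obtain as where f: "f = refl_word as" "set as \<subseteq> \<Phi>" by (auto simp: Wf_def)
  have "(refl_word (rev (rev as)) \<circ> refl_word (rev as)) x = x"
    using refl_word_rev_inv[of "rev as"] word_nz[OF f(2)] by simp
  then show ?thesis using f by (simp add: refl_word_inv word_nz)
qed
lemma inv_refl: "a \<in> \<Phi> \<Longrightarrow> inv (refl a) = refl a"
  by (rule inv_unique_comp) (auto simp: refl_comp_refl root_nz)

lemma Ws_Wf: "u \<in> Ws \<Longrightarrow> u \<in> Wf" using Delta_sub by (auto simp: Ws_def Wf_def)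

lemma len_le: "set as \<subseteq> \<Delta> \<Longrightarrow> len (refl_word as) \<le> length as"
  unfolding weyl_length_def by (rule Least_le) auto

lemma len_ex: "u \<in> Ws \<Longrightarrow> \<exists>as. set as \<subseteq> \<Delta> \<and> length as = len u \<and> refl_word as = u"
proof -
  assume "u \<in> Ws"
  then obtain bs where "set bs \<subseteq> \<Delta>" "refl_word bs = u" by (auto simp: Ws_def)
  then have "\<exists>as. length as = len u \<and> set as \<subseteq> \<Delta> \<and> refl_word as = u"
    unfolding weyl_length_def by (intro LeastI_ex[where P="\<lambda>n. \<exists>as. length as = n \<and> set as \<subseteq> \<Delta> \<and> refl_word as = u"]) blast
  then show ?thesis by blast
qed

lemma Ws_simple: "\<alpha> \<in> \<Delta> \<Longrightarrow> u \<in> Ws \<Longrightarrow> refl \<alpha> \<circ> u \<in> Ws \<and> len (refl \<alpha> \<circ> u) \<le> len u + 1"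
proof -
  assume a: "\<alpha> \<in> \<Delta>" "u \<in> Ws"
  then obtain as where as: "set as \<subseteq> \<Delta>" "length as = len u" "refl_word as = u" using len_ex by blast
  have "refl \<alpha> \<circ> u = refl_word (\<alpha> # as)" using as by simp
  moreover have "set (\<alpha> # as) \<subseteq> \<Delta>" using as a by auto
  moreover have "len (refl_word (\<alpha> # as)) \<le> len u + 1" using len_le[of "\<alpha> # as"] as a by simp
  ultimately show ?thesis unfolding Ws_def using \<open>set (\<alpha> # as) \<subseteq> \<Delta>\<close>
    by (metis (mono_tags, lifting) mem_Collect_eq)
qed

lemma Ws_comp: "u \<in> Ws \<Longrightarrow> v \<in> Ws \<Longrightarrow> u \<circ> v \<in> Ws"
proof -
  assume "u \<in> Ws" "v \<in> Ws"
  then obtain as bs where f: "u = refl_word as" "set as \<subseteq> \<Delta>" and g: "v = refl_word bs" "set bs \<subseteq> \<Delta>"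
    by (auto simp: Ws_def)
  then have "u \<circ> v = refl_word (as @ bs)" by (simp add: refl_word_append)
  then show ?thesis using f g unfolding Ws_def by (intro CollectI exI[of _ "as @ bs"]) auto
qed

lemma Ws_id: "id \<in> Ws" unfolding Ws_def by (auto intro!: exI[of _ "[]"])

lemma refl_conj_refl: "\<alpha> \<in> \<Phi> \<Longrightarrow> refl (refl \<alpha> b) = refl \<alpha> \<circ> refl b \<circ> refl \<alpha>"
proof (rule ext)
  fix y assume a: "\<alpha> \<in> \<Phi>"
  have "refl \<alpha> (refl b (refl \<alpha> y)) = refl (refl \<alpha> b) (refl \<alpha> (refl \<alpha> y))"
    by (rule refl_conj) (auto simp: refl_linear refl_inner root_nz[OF a])
  then show "refl (refl \<alpha> b) y = (refl \<alpha> \<circ> refl b \<circ> refl \<alpha>) y"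
    by (simp add: refl_refl root_nz[OF a])
qed

lemma refl_simple_rep:
  assumes al: "\<alpha> \<in> \<Delta>" and c: "\<beta> = (\<Sum>a\<in>\<Delta>. c a *\<^sub>R a)"
  shows "refl \<alpha> \<beta> = (\<Sum>a\<in>\<Delta>. (c a - (if a = \<alpha> then 2 * (\<beta> \<bullet> \<alpha>) / (\<alpha> \<bullet> \<alpha>) else 0)) *\<^sub>R a)"
proof -
  define k where "k = 2 * (\<beta> \<bullet> \<alpha>) / (\<alpha> \<bullet> \<alpha>)"
  have e1: "(\<lambda>a. (if a = \<alpha> then k else 0) *\<^sub>R a) = (\<lambda>a. if a = \<alpha> then k *\<^sub>R \<alpha> else 0)"
    by auto
  have e2: "(\<Sum>a\<in>\<Delta>. (if a = \<alpha> then k else 0) *\<^sub>R a) = k *\<^sub>R \<alpha>"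
    unfolding e1 using finD al by (simp add: sum.delta)
  have e3: "(\<Sum>a\<in>\<Delta>. (c a - (if a = \<alpha> then k else 0)) *\<^sub>R a)
      = (\<Sum>a\<in>\<Delta>. c a *\<^sub>R a) - (\<Sum>a\<in>\<Delta>. (if a = \<alpha> then k else 0) *\<^sub>R a)"
    by (simp only: scaleR_diff_left sum_subtractf)
  show ?thesis
    unfolding k_def[symmetric] e3 e2 c[symmetric] by (simp add: refl_def k_def)
qed

lemma ht_ind:
  "\<forall>\<beta> c. \<beta> \<in> P \<longrightarrow> \<beta> = (\<Sum>a\<in>\<Delta>. c a *\<^sub>R a) \<longrightarrow> (\<forall>a\<in>\<Delta>. c a \<in> \<int> \<and> c a \<ge> 0)
     \<longrightarrow> (\<Sum>a\<in>\<Delta>. c a) < real n \<longrightarrow> refl \<beta> \<in> Ws"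
proof (induction n)
  case 0
  show ?case
  proof (intro allI impI)
    fix \<beta> c assume "\<forall>a\<in>\<Delta>. c a \<in> \<int> \<and> c a \<ge> 0" "(\<Sum>a\<in>\<Delta>. c a) < real 0"
    moreover have "(\<Sum>a\<in>\<Delta>. c a) \<ge> 0" by (rule sum_nonneg) (use calculation in auto)
    ultimately show "refl \<beta> \<in> Ws" by simp
  qed
next
  case (Suc n)
  show ?case
  proof (intro allI impI)
    fix \<beta> c
    assume b: "\<beta> \<in> P" and c: "\<beta> = (\<Sum>a\<in>\<Delta>. c a *\<^sub>R a)" and ci: "\<forall>a\<in>\<Delta>. c a \<in> \<int> \<and> c a \<ge> 0"
      and s: "(\<Sum>a\<in>\<Delta>. c a) < real (Suc n)"
    have bP: "\<beta> \<in> \<Phi>" using b P_root by auto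
    have "\<beta> \<bullet> \<beta> > 0" using root_nz[OF bP] by simp
    also have "\<beta> \<bullet> \<beta> = (\<Sum>a\<in>\<Delta>. c a * (a \<bullet> \<beta>))"
      by (subst (1) c) (simp add: inner_sum_left)
    finally have "\<exists>a\<in>\<Delta>. c a * (a \<bullet> \<beta>) > 0"
      by (meson not_less sum_nonpos)
    then obtain \<alpha> where al: "\<alpha> \<in> \<Delta>" "c \<alpha> * (\<alpha> \<bullet> \<beta>) > 0" by blast
    then have ca: "c \<alpha> > 0" and ab: "\<alpha> \<bullet> \<beta> > 0" using ci by (auto simp: zero_less_mult_iff)
    have alP: "\<alpha> \<in> \<Phi>" using al Delta_sub by auto
    show "refl \<beta> \<in> Ws"
    proof (cases "\<beta> = \<alpha>")
      case True
      then show ?thesis unfolding Ws_def using al by (auto intro!: exI[of _ "[\<alpha>]"])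
    next
      case False
      define k where "k = 2 * (\<beta> \<bullet> \<alpha>) / (\<alpha> \<bullet> \<alpha>)"
      have kZ: "k \<in> \<int>" unfolding k_def using cryst[OF bP alP] .
      have kpos: "k > 0" unfolding k_def using ab root_nz[OF alP] by (simp add: inner_commute)
      have k1: "k \<ge> 1" using Ints_nonzero_abs_ge1[OF kZ] kpos by auto
      define c' where "c' = (\<lambda>a. c a - (if a = \<alpha> then k else 0))"
      define \<beta>' where "\<beta>' = refl \<alpha> \<beta>"
      have b'P: "\<beta>' \<in> P" unfolding \<beta>'_def using simple_refl_pos[OF al(1) b False] .
      have b'rep: "\<beta>' = (\<Sum>a\<in>\<Delta>. c' a *\<^sub>R a)"
        unfolding \<beta>'_def c'_def k_def using refl_simple_rep[OF al(1) c] .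
      obtain d where d: "\<beta>' = (\<Sum>a\<in>\<Delta>. d a *\<^sub>R a)" "\<forall>a\<in>\<Delta>. d a \<ge> 0"
        using b'P by (auto simp: P_iff cone_def)
      have "(\<Sum>a\<in>\<Delta>. c' a *\<^sub>R a) = (\<Sum>a\<in>\<Delta>. d a *\<^sub>R a)" using b'rep d(1) by simp
      then have cd: "\<forall>a\<in>\<Delta>. c' a = d a" using coeff_unique by blast
      have c'i: "\<forall>a\<in>\<Delta>. c' a \<in> \<int> \<and> c' a \<ge> 0"
      proof
        fix a assume a: "a \<in> \<Delta>"
        have "c' a \<in> \<int>" unfolding c'_def using ci a kZ by (auto intro: Ints_diff)
        moreover have "c' a \<ge> 0" using cd d(2) a by auto
        ultimately show "c' a \<in> \<int> \<and> c' a \<ge> 0" by blast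
      qed
      have "(\<Sum>a\<in>\<Delta>. c' a) = (\<Sum>a\<in>\<Delta>. c a) - (\<Sum>a\<in>\<Delta>. (if a = \<alpha> then k else 0))"
        unfolding c'_def by (simp add: sum_subtractf)
      also have "\<dots> = (\<Sum>a\<in>\<Delta>. c a) - k" using finD al by (simp add: sum.delta)
      finally have "(\<Sum>a\<in>\<Delta>. c' a) < real n" using s k1 by simp
      then have "refl \<beta>' \<in> Ws" using Suc.IH b'P b'rep c'i by blast
      moreover have "\<beta> = refl \<alpha> \<beta>'" unfolding \<beta>'_def using refl_refl[OF root_nz[OF alP]] by simp
      ultimately have "refl \<beta> = refl \<alpha> \<circ> refl \<beta>' \<circ> refl \<alpha>" using refl_conj_refl[OF alP] by simp
      moreover have "refl \<alpha> \<in> Ws" unfolding Ws_def using al by (auto intro!: exI[of _ "[\<alpha>]"])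
      ultimately show ?thesis using \<open>refl \<beta>' \<in> Ws\<close> Ws_comp by metis
    qed
  qed
qed

lemma refl_Ws: "\<beta> \<in> \<Phi> \<Longrightarrow> refl \<beta> \<in> Ws"
proof -
  assume bP: "\<beta> \<in> \<Phi>"
  have pos: "refl \<gamma> \<in> Ws" if g: "\<gamma> \<in> P" for \<gamma>
  proof -
    obtain c where c: "\<gamma> = (\<Sum>a\<in>\<Delta>. c a *\<^sub>R a)" "\<forall>a\<in>\<Delta>. c a \<in> \<int> \<and> c a \<ge> 0"
      using pos_rep_int[OF g] by blast
    obtain n :: nat where "(\<Sum>a\<in>\<Delta>. c a) < real n" using reals_Archimedean2 by blast
    then show ?thesis using ht_ind[of n] g c by blast
  qed
  show ?thesis using root_cases[OF bP] pos refl_uminus by metis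
qed

lemma weyl_Ws: "w \<in> weyl_group \<Phi> \<Longrightarrow> w \<in> Ws"
proof (induction rule: weyl_group.induct)
  case weyl_id then show ?case by (rule Ws_id)
next
  case (weyl_step w a) then show ?case using refl_Ws Ws_comp by blast
qed

lemma Ws_refl_comp: "\<beta> \<in> \<Phi> \<Longrightarrow> u \<in> Ws \<Longrightarrow> refl \<beta> \<circ> u \<in> Ws"
  using refl_Ws Ws_comp by blast

end


context RS begin

lemma dec_if: "\<forall>u\<in>Ws. len u = n \<longrightarrow> (\<forall>\<beta>\<in>P. - inv u \<beta> \<in> P \<longrightarrow> len (refl \<beta> \<circ> u) < len u)"
proof (induction n rule: less_induct)
  case (less n)
  show ?case
  proof (intro ballI impI)
    fix u \<beta> assume u: "u \<in> Ws" and n: "len u = n" and b: "\<beta> \<in> P" and nb: "- inv u \<beta> \<in> P"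
    obtain as where as: "set as \<subseteq> \<Delta>" "length as = len u" "refl_word as = u" using len_ex[OF u] by blast
    show "len (refl \<beta> \<circ> u) < len u"
    proof (cases as)
      case Nil
      then have "u = id" using as by simp
      then have "- \<beta> \<in> P" using nb by simp
      then show ?thesis using not_both b by blast
    next
      case (Cons \<alpha> as')
      define u' where "u' = refl_word as'"
      have al: "\<alpha> \<in> \<Delta>" using as Cons by auto
      have alP: "\<alpha> \<in> \<Phi>" using al Delta_sub by auto
      have u'W: "u' \<in> Ws" unfolding Ws_def u'_def using as Cons by auto
      have uu: "u = refl \<alpha> \<circ> u'" using as Cons u'_def by simp
      have l1: "len u' \<le> length as'" unfolding u'_def using len_le as Cons by auto
      have l2: "len u \<le> len u' + 1" using Ws_simple[OF al u'W] uu by simp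
      have lu': "len u' + 1 = len u" using l1 l2 as Cons by simp
      have invu: "inv u = inv u' \<circ> refl \<alpha>"
        using Wf_inv_comp[OF Wf_refl[OF alP] Ws_Wf[OF u'W]] inv_refl[OF alP] uu by simp
      show ?thesis
      proof (cases "\<beta> = \<alpha>")
        case True
        then have "refl \<beta> \<circ> u = u'" using uu refl_refl[OF root_nz[OF alP]] by (simp add: fun_eq_iff)
        then show ?thesis using lu' by simp
      next
        case False
        define \<beta>' where "\<beta>' = refl \<alpha> \<beta>"
        have b'P: "\<beta>' \<in> P" unfolding \<beta>'_def using simple_refl_pos[OF al b False] .
        have "inv u' \<beta>' = inv u \<beta>" using invu \<beta>'_def by simp
        moreover have "len u' < n" using lu' n by simp
        ultimately have "len (refl \<beta>' \<circ> u') < len u'"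
          using less.IH[of "len u'"] u'W b'P nb by metis
        moreover have "\<beta> = refl \<alpha> \<beta>'" unfolding \<beta>'_def using refl_refl[OF root_nz[OF alP]] by simp
        then have "refl \<beta> = refl \<alpha> \<circ> refl \<beta>' \<circ> refl \<alpha>" using refl_conj_refl[OF alP] by simp
        then have "refl \<beta> \<circ> u = refl \<alpha> \<circ> (refl \<beta>' \<circ> u')"
          using uu refl_refl[OF root_nz[OF alP]] by (simp add: fun_eq_iff)
        moreover have "refl \<beta>' \<circ> u' \<in> Ws" using Ws_refl_comp P_root b'P u'W by blast
        ultimately show ?thesis using Ws_simple[OF al] lu' by fastforce
      qed
    qed
  qed
qed

definition dec :: "('a \<Rightarrow> 'a) \<Rightarrow> 'a \<Rightarrow> bool" where
  "dec u r \<longleftrightarrow> len (refl r \<circ> u) < len u"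

lemma dec_char: assumes u: "u \<in> Ws" and b: "\<beta> \<in> P"
  shows "dec u \<beta> \<longleftrightarrow> - inv u \<beta> \<in> P"
proof
  assume "- inv u \<beta> \<in> P" then show "dec u \<beta>" unfolding dec_def using dec_if u b by blast
next
  assume d: "dec u \<beta>"
  show "- inv u \<beta> \<in> P"
  proof (rule ccontr)
    assume nb: "- inv u \<beta> \<notin> P"
    have bP: "\<beta> \<in> \<Phi>" using b P_root by auto
    have uf: "u \<in> Wf" using Ws_Wf u by auto
    have "inv u \<beta> \<in> \<Phi>" using Wf_root[OF Wf_inv[OF uf] bP] .
    then have ip: "inv u \<beta> \<in> P" using root_cases nb by blast
    define v where "v = refl \<beta> \<circ> u"
    have vW: "v \<in> Ws" unfolding v_def using Ws_refl_comp bP u by blast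
    have "inv v = inv u \<circ> refl \<beta>"
      unfolding v_def using Wf_inv_comp[OF Wf_refl[OF bP] uf] inv_refl[OF bP] by simp
    then have "inv v \<beta> = - inv u \<beta>"
      using refl_self[OF root_nz[OF bP]] linear_neg[OF Wf_linear[OF Wf_inv[OF uf]]] by simp
    then have "- inv v \<beta> \<in> P" using ip by simp
    then have "len (refl \<beta> \<circ> v) < len v" using dec_if vW b by blast
    moreover have "refl \<beta> \<circ> v = u" unfolding v_def using refl_refl[OF root_nz[OF bP]]
      by (simp add: fun_eq_iff)
    ultimately show False using d unfolding dec_def v_def by simp
  qed
qed

lemma inv_step: "x \<in> Ws \<Longrightarrow> r \<in> \<Phi> \<Longrightarrow> inv (refl r \<circ> x) = inv x \<circ> refl r"
  using Wf_inv_comp[OF Wf_refl Ws_Wf] inv_refl by simp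

lemma swap_dec:
  assumes x: "x \<in> Ws" and a: "a \<in> P" and b: "b \<in> P" and ab: "a \<bullet> b = 0"
    and d1: "dec x a" and d2: "dec (refl a \<circ> x) b"
  shows "dec x b" "dec (refl b \<circ> x) a" "refl a \<circ> (refl b \<circ> x) = refl b \<circ> (refl a \<circ> x)"
proof -
  have aP: "a \<in> \<Phi>" and bP: "b \<in> \<Phi>" using a b P_root by auto
  have xa: "refl a \<circ> x \<in> Ws" and xb: "refl b \<circ> x \<in> Ws" using Ws_refl_comp aP bP x by auto
  have rab: "refl a b = b" using ab by (simp add: refl_orth inner_commute)
  have rba: "refl b a = a" using ab by (simp add: refl_orth)
  have "- inv (refl a \<circ> x) b \<in> P" using dec_char[OF xa b] d2 by simp
  then have "- inv x b \<in> P" using inv_step[OF x aP] rab by simp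
  then show "dec x b" using dec_char[OF x b] by simp
  have "- inv x a \<in> P" using dec_char[OF x a] d1 by simp
  then have "- inv (refl b \<circ> x) a \<in> P" using inv_step[OF x bP] rba by simp
  then show "dec (refl b \<circ> x) a" using dec_char[OF xb a] by simp
  show "refl a \<circ> (refl b \<circ> x) = refl b \<circ> (refl a \<circ> x)"
    using refl_orth_comm[OF ab] by (auto simp: fun_eq_iff)
qed

end


lemma ints_gt1: "(x::real) \<in> \<int> \<Longrightarrow> x > 1 \<Longrightarrow> x \<ge> 2"
  by (elim Ints_cases) simp

lemma ints_prod_ge2:
  fixes k k' :: real
  assumes "k \<in> \<int>" "k' \<in> \<int>" "k * k' > 0" "\<not> (\<bar>k\<bar> = 1 \<and> \<bar>k'\<bar> = 1)"
  shows "k * k' \<ge> 2"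
proof -
  have kz: "k \<noteq> 0" and kz': "k' \<noteq> 0" using assms(3) by auto
  have a1: "\<bar>k\<bar> \<ge> 1" using Ints_nonzero_abs_ge1[OF assms(1) kz] .
  have a2: "\<bar>k'\<bar> \<ge> 1" using Ints_nonzero_abs_ge1[OF assms(2) kz'] .
  have i1: "\<bar>k\<bar> \<in> \<int>" using assms(1) by (simp add: Ints_abs)
  have i2: "\<bar>k'\<bar> \<in> \<int>" using assms(2) by (simp add: Ints_abs)
  have "\<bar>k\<bar> * \<bar>k'\<bar> \<ge> 2"
  proof (cases "\<bar>k\<bar> = 1")
    case True
    then have "\<bar>k'\<bar> > 1" using assms(4) a2 by auto
    then have "\<bar>k'\<bar> \<ge> 2" using ints_gt1[OF i2] by blast
    then show ?thesis using True by simp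
  next
    case False
    then have "\<bar>k\<bar> \<ge> 2" using ints_gt1[OF i1] a1 by auto
    then have "\<bar>k\<bar> * \<bar>k'\<bar> \<ge> 2 * 1" using a2 by (intro mult_mono) auto
    then show ?thesis by simp
  qed
  then show ?thesis using assms(3) by (simp add: abs_mult[symmetric])
qed

context RS begin

definition Gp :: "('a \<Rightarrow> 'a) \<Rightarrow> 'a \<Rightarrow> 'a \<Rightarrow> bool" where
  "Gp Z c e \<longleftrightarrow> (refl c e \<in> P \<and> - Z (refl e c) \<in> P) \<or> (refl e c \<in> P \<and> Z (refl c e) \<in> P)"

lemma refl_expand: "refl e c = c - (2 * (c \<bullet> e) / (e \<bullet> e)) *\<^sub>R e"
  by (simp add: refl_def)

lemma pp_ineq:
  assumes e: "e \<in> \<Phi>" and c: "c \<in> \<Phi>" and ne: "e \<bullet> c \<noteq> 0"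
    and not11: "\<not> (\<bar>2 * (c \<bullet> e) / (e \<bullet> e)\<bar> = 1 \<and> \<bar>2 * (e \<bullet> c) / (c \<bullet> c)\<bar> = 1)"
  shows "2 * (e \<bullet> c)^2 \<ge> (e \<bullet> e) * (c \<bullet> c)"
proof -
  define p where "p = 2 * (c \<bullet> e) / (e \<bullet> e)"
  define p' where "p' = 2 * (e \<bullet> c) / (c \<bullet> c)"
  have E: "e \<bullet> e > 0" and C: "c \<bullet> c > 0" using root_nz e c by auto
  have pp: "p * p' = 4 * (e \<bullet> c)^2 / ((e \<bullet> e) * (c \<bullet> c))"
    unfolding p_def p'_def by (simp add: inner_commute power2_eq_square)
  have "p * p' > 0" unfolding pp using E C ne by (simp add: divide_pos_pos)
  then have "p * p' \<ge> 2"
    using ints_prod_ge2[of p p'] cryst[OF c e] cryst[OF e c] not11 unfolding p_def p'_def by blast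
  then have "4 * (e \<bullet> c)^2 / ((e \<bullet> e) * (c \<bullet> c)) \<ge> 2" unfolding pp .
  then show ?thesis using E C by (simp add: field_simps)
qed

lemma bad_pos:
  assumes Z: "Z \<in> Wf" and e: "e \<in> P" and c: "c \<in> P" and pos: "e \<bullet> c > 0"
    and Ze: "Z e \<in> P" and Zc: "- Z c \<in> P" and nG: "\<not> Gp Z c e"
  shows "- refl c e \<in> P" "- refl e c \<in> P" "2 * (e \<bullet> c)^2 \<ge> (e \<bullet> e) * (c \<bullet> c)"
proof -
  have eP: "e \<in> \<Phi>" and cP: "c \<in> \<Phi>" using e c P_root by auto
  have E: "e \<bullet> e > 0" and C: "c \<bullet> c > 0" using root_nz eP cP by auto
  define p where "p = 2 * (c \<bullet> e) / (e \<bullet> e)"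
  define p' where "p' = 2 * (e \<bullet> c) / (c \<bullet> c)"
  have pp: "p > 0" "p' > 0" unfolding p_def p'_def using pos E C by (auto simp: inner_commute)
  have r1: "refl e c = c - p *\<^sub>R e" unfolding p_def by (simp add: refl_def)
  have r2: "refl c e = e - p' *\<^sub>R c" unfolding p'_def by (simp add: refl_def)
  have lin: "linear Z" using Wf_linear[OF Z] .
  have eq1: "Z (refl c e) = Z e + p' *\<^sub>R (- Z c)"
    unfolding r2 by (simp add: linear_diff[OF lin] linear_scale[OF lin])
  have rt1: "Z (refl c e) \<in> \<Phi>" using Wf_root[OF Z refl_closed[OF cP eP]] .
  have A: "Z (refl c e) \<in> P" by (rule pos_comb[OF rt1 eq1 Ze Zc]) (use pp in auto)
  have eq2: "- Z (refl e c) = - Z c + p *\<^sub>R Z e"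
    unfolding r1 by (simp add: linear_diff[OF lin] linear_scale[OF lin])
  have rt2: "- Z (refl e c) \<in> \<Phi>" using neg_closed Wf_root[OF Z refl_closed[OF eP cP]] by blast
  have B: "- Z (refl e c) \<in> P" by (rule pos_comb[OF rt2 eq2 Zc Ze]) (use pp in auto)
  have n1: "refl c e \<notin> P" using nG B unfolding Gp_def by blast
  have n2: "refl e c \<notin> P" using nG A unfolding Gp_def by blast
  show s1: "- refl c e \<in> P" using root_cases[OF refl_closed[OF cP eP]] n1 by blast
  show s2: "- refl e c \<in> P" using root_cases[OF refl_closed[OF eP cP]] n2 by blast
  have "\<not> (\<bar>p\<bar> = 1 \<and> \<bar>p'\<bar> = 1)"
  proof
    assume "\<bar>p\<bar> = 1 \<and> \<bar>p'\<bar> = 1"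
    then have "p = 1" "p' = 1" using pp by auto
    then have "refl e c = - refl c e" using r1 r2 by simp
    then show False using s1 n2 by simp
  qed
  then show "2 * (e \<bullet> c)^2 \<ge> (e \<bullet> e) * (c \<bullet> c)"
    using pp_ineq[OF eP cP] pos unfolding p_def p'_def by auto
qed

lemma bad_neg:
  assumes Z: "Z \<in> Wf" and e: "e \<in> P" and c: "c \<in> P" and neg: "e \<bullet> c < 0"
    and nG: "\<not> Gp Z c e"
  shows "Z (refl e c) \<in> P" "- Z (refl c e) \<in> P" "2 * (e \<bullet> c)^2 \<ge> (e \<bullet> e) * (c \<bullet> c)"
proof -
  have eP: "e \<in> \<Phi>" and cP: "c \<in> \<Phi>" using e c P_root by auto
  have E: "e \<bullet> e > 0" and C: "c \<bullet> c > 0" using root_nz eP cP by auto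
  define p where "p = 2 * (c \<bullet> e) / (e \<bullet> e)"
  define p' where "p' = 2 * (e \<bullet> c) / (c \<bullet> c)"
  have pp: "p < 0" "p' < 0" unfolding p_def p'_def using neg E C
    by (auto simp: inner_commute divide_neg_pos)
  have r1: "refl e c = c + (- p) *\<^sub>R e" unfolding p_def by (simp add: refl_def)
  have r2: "refl c e = e + (- p') *\<^sub>R c" unfolding p'_def by (simp add: refl_def)
  have A: "refl e c \<in> P" using pos_comb[OF refl_closed[OF eP cP] r1 c e] pp by auto
  have B: "refl c e \<in> P" using pos_comb[OF refl_closed[OF cP eP] r2 e c] pp by auto
  have n1: "- Z (refl e c) \<notin> P" using nG B unfolding Gp_def by blast
  have n2: "Z (refl c e) \<notin> P" using nG A unfolding Gp_def by blast
  show s1: "Z (refl e c) \<in> P" using root_cases[OF Wf_root[OF Z refl_closed[OF eP cP]]] n1 by blast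
  show s2: "- Z (refl c e) \<in> P" using root_cases[OF Wf_root[OF Z refl_closed[OF cP eP]]] n2 by blast
  have "\<not> (\<bar>p\<bar> = 1 \<and> \<bar>p'\<bar> = 1)"
  proof
    assume "\<bar>p\<bar> = 1 \<and> \<bar>p'\<bar> = 1"
    then have "p = -1" "p' = -1" using pp by auto
    then have "refl e c = refl c e" using r1 r2 by (simp add: add.commute)
    then show False using s1 s2 not_both by simp
  qed
  then show "2 * (e \<bullet> c)^2 \<ge> (e \<bullet> e) * (c \<bullet> c)"
    using pp_ineq[OF eP cP] neg unfolding p_def p'_def by auto
qed

end


lemma sign_mult: "(A::real) > 0 \<Longrightarrow> (x * A > 0 \<longleftrightarrow> x > 0) \<and> (x * A < 0 \<longleftrightarrow> x < 0)"
  by (simp add: zero_less_mult_iff mult_less_0_iff)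

context RS begin

lemma TG:
  assumes Z: "Z \<in> Wf" and a: "a \<in> P" and b: "b \<in> P" and c: "c \<in> P"
    and ab: "a \<bullet> b = 0" and bc: "b \<bullet> c \<noteq> 0"
    and Za: "Z a \<in> P" and Zb: "Z b \<in> P" and Zc: "- Z c \<in> P"
  shows "Gp Z c a \<or> (a \<bullet> c \<noteq> 0 \<and> Gp Z c b)"
proof (cases "a \<bullet> c = 0")
  case True
  have "refl a c = c" using True by (simp add: refl_orth inner_commute)
  moreover have "refl c a = a" using True by (simp add: refl_orth)
  ultimately show ?thesis using c Za unfolding Gp_def by simp
next
  case False
  show ?thesis
  proof (rule ccontr)
    assume "\<not> ?thesis"
    then have nGa: "\<not> Gp Z c a" and nGb: "\<not> Gp Z c b" using False by auto
    have aP: "a \<in> \<Phi>" and bP: "b \<in> \<Phi>" and cP: "c \<in> \<Phi>" using a b c P_root by auto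
    have A: "a \<bullet> a > 0" and B: "b \<bullet> b > 0" and C: "c \<bullet> c > 0" using root_nz aP bP cP by auto
    have ia: "2 * (a \<bullet> c)^2 \<ge> (a \<bullet> a) * (c \<bullet> c)"
      using bad_pos(3)[OF Z a c _ Za Zc nGa] bad_neg(3)[OF Z a c _ nGa] False
      by (cases "a \<bullet> c > 0") auto
    have ib: "2 * (b \<bullet> c)^2 \<ge> (b \<bullet> b) * (c \<bullet> c)"
      using bad_pos(3)[OF Z b c _ Zb Zc nGb] bad_neg(3)[OF Z b c _ nGb] bc
      by (cases "b \<bullet> c > 0") auto
    define \<alpha> where "\<alpha> = (c \<bullet> a) / (a \<bullet> a)"
    define \<beta> where "\<beta> = (c \<bullet> b) / (b \<bullet> b)"
    define v where "v = c - \<alpha> *\<^sub>R a - \<beta> *\<^sub>R b"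
    have ba: "b \<bullet> a = 0" using ab by (simp add: inner_commute)
    define x where "x = \<alpha> *\<^sub>R a + \<beta> *\<^sub>R b"
    have vx: "v = c - x" unfolding v_def x_def by (simp add: algebra_simps)
    have cx: "c \<bullet> x = \<alpha> * (c \<bullet> a) + \<beta> * (c \<bullet> b)" unfolding x_def by (simp add: inner_add_right)
    have xx: "x \<bullet> x = \<alpha>^2 * (a \<bullet> a) + \<beta>^2 * (b \<bullet> b)"
      unfolding x_def by (simp add: inner_add_left inner_add_right ab ba power2_eq_square)
    have vv0: "v \<bullet> v = c \<bullet> c - 2 * (c \<bullet> x) + x \<bullet> x"
      unfolding vx by (simp add: inner_diff_left inner_diff_right inner_commute)
    have t1: "\<alpha> * (c \<bullet> a) = (c \<bullet> a)^2 / (a \<bullet> a)" "\<alpha>^2 * (a \<bullet> a) = (c \<bullet> a)^2 / (a \<bullet> a)"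
      unfolding \<alpha>_def using A by (simp_all add: power2_eq_square field_simps)
    have t2: "\<beta> * (c \<bullet> b) = (c \<bullet> b)^2 / (b \<bullet> b)" "\<beta>^2 * (b \<bullet> b) = (c \<bullet> b)^2 / (b \<bullet> b)"
      unfolding \<beta>_def using B by (simp_all add: power2_eq_square field_simps)
    have vv: "v \<bullet> v = c \<bullet> c - (c \<bullet> a)^2 / (a \<bullet> a) - (c \<bullet> b)^2 / (b \<bullet> b)"
      using vv0 cx xx t1 t2 by simp
    have ha: "(c \<bullet> a)^2 / (a \<bullet> a) \<ge> (c \<bullet> c) / 2" using ia A by (simp add: field_simps inner_commute)
    have hb: "(c \<bullet> b)^2 / (b \<bullet> b) \<ge> (c \<bullet> c) / 2" using ib B by (simp add: field_simps inner_commute)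
    have v0: "v \<bullet> v \<ge> 0" by simp
    have eqa: "(c \<bullet> a)^2 / (a \<bullet> a) = (c \<bullet> c) / 2" using vv ha hb v0 by linarith
    have "v \<bullet> v = 0" using vv ha hb v0 by linarith
    then have "v = 0" by simp
    then have cab: "c = \<alpha> *\<^sub>R a + \<beta> *\<^sub>R b" unfolding v_def by (simp add: algebra_simps)
    have caA: "c \<bullet> a = \<alpha> * (a \<bullet> a)" unfolding \<alpha>_def using A by simp
    have cbB: "c \<bullet> b = \<beta> * (b \<bullet> b)" unfolding \<beta>_def using B by simp
    have anz: "\<alpha> \<noteq> 0" using False caA by (auto simp: inner_commute)
    have Cexp: "c \<bullet> c = 2 * \<alpha>^2 * (a \<bullet> a)" using eqa caA A by (simp add: power2_eq_square field_simps)
    have k1: "2 * (a \<bullet> c) / (c \<bullet> c) = 1 / \<alpha>"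
      using Cexp caA anz A by (simp add: inner_commute power2_eq_square field_simps)
    have rca: "refl c a = (- (\<beta> / \<alpha>)) *\<^sub>R b"
    proof -
      have "refl c a = a - (1 / \<alpha>) *\<^sub>R c" using k1 by (simp add: refl_def)
      also have "\<dots> = (- (\<beta> / \<alpha>)) *\<^sub>R b" using anz by (subst cab) (simp add: algebra_simps)
      finally show ?thesis .
    qed
    have rac: "refl a c = (- \<alpha>) *\<^sub>R a + \<beta> *\<^sub>R b"
    proof -
      have "refl a c = c - (2 * \<alpha>) *\<^sub>R a" using caA A by (simp add: refl_def)
      also have "\<dots> = (- \<alpha>) *\<^sub>R a + \<beta> *\<^sub>R b" by (subst cab) (simp add: algebra_simps scaleR_2 flip: scaleR_scaleR)
      finally show ?thesis .
    qed
    have rbc: "refl b c = - refl a c"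
    proof -
      have "refl b c = c - (2 * \<beta>) *\<^sub>R b" using cbB B by (simp add: refl_def)
      also have "\<dots> = - refl a c" unfolding rac by (subst cab) (simp add: algebra_simps scaleR_2 flip: scaleR_scaleR)
      finally show ?thesis .
    qed
    have lin: "linear Z" using Wf_linear[OF Z] .
    have ac: "a \<bullet> c = \<alpha> * (a \<bullet> a)" and bcc: "b \<bullet> c = \<beta> * (b \<bullet> b)" using caA cbB by (simp_all add: inner_commute)
    have sa: "a \<bullet> c > 0 \<longleftrightarrow> \<alpha> > 0" and sa': "a \<bullet> c < 0 \<longleftrightarrow> \<alpha> < 0"
      unfolding ac using sign_mult[OF A] by auto
    have sb: "b \<bullet> c > 0 \<longleftrightarrow> \<beta> > 0" and sb': "b \<bullet> c < 0 \<longleftrightarrow> \<beta> < 0"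
      unfolding bcc using sign_mult[OF B] by auto
    have bnz: "\<beta> \<noteq> 0" using bc cbB by (auto simp: inner_commute)
    show False
    proof (cases "\<alpha> > 0")
      case apos: True
      show False
      proof (cases "\<beta> > 0")
        case True
        have "- refl a c \<in> P" using bad_pos(2)[OF Z a c _ Za Zc nGa] apos sa by simp
        moreover have "- refl b c \<in> P" using bad_pos(2)[OF Z b c _ Zb Zc nGb] True sb by simp
        ultimately show False using rbc not_both by simp
      next
        case False
        then have "\<beta> < 0" using bnz by simp
        have "- refl c a \<in> P" using bad_pos(1)[OF Z a c _ Za Zc nGa] apos sa by simp
        moreover have "refl c a \<in> P"
          by (rule pos_scale[OF refl_closed[OF cP aP] rca b]) (use \<open>\<beta> < 0\<close> apos in \<open>simp add: divide_neg_pos\<close>)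
        ultimately show False using not_both by blast
      qed
    next
      case False
      then have aneg: "\<alpha> < 0" using anz by simp
      show False
      proof (cases "\<beta> > 0")
        case True
        have "- Z (refl c a) \<in> P" using bad_neg(2)[OF Z a c _ nGa] aneg sa' by simp
        moreover have "Z (refl c a) = (- (\<beta> / \<alpha>)) *\<^sub>R Z b" unfolding rca by (simp only: linear_scale[OF lin])
        then have "Z (refl c a) \<in> P"
          by (rule pos_scale[OF Wf_root[OF Z refl_closed[OF cP aP]] _ Zb]) (use True aneg in \<open>auto simp: divide_pos_neg\<close>)
        ultimately show False using not_both by blast
      next
        case False
        then have bneg: "\<beta> < 0" using bnz by simp
        have "Z (refl a c) \<in> P" using bad_neg(1)[OF Z a c _ nGa] aneg sa' by simp
        moreover have "Z (refl b c) \<in> P" using bad_neg(1)[OF Z b c _ nGb] bneg sb' by simp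
        moreover have "Z (refl b c) = - Z (refl a c)" unfolding rbc by (simp add: linear_neg[OF lin])
        ultimately show False using not_both by simp
      qed
    qed
  qed
qed

end


context RS begin

lemma cand:
  assumes x: "x \<in> Ws" and e: "e \<in> P" and f: "f \<in> P" and c: "c \<in> P"
    and ef: "e \<bullet> f = 0" and fc: "f \<bullet> c \<noteq> 0"
    and Xe: "- inv x e \<in> P" and Xf: "- inv x f \<in> P"
    and Zc: "- (inv x \<circ> refl e \<circ> refl f) c \<in> P"
    and G: "Gp (inv x \<circ> refl e \<circ> refl f) c e"
  shows "\<exists>r2 r3. r2 \<in> P \<and> r3 \<in> P \<and> f \<bullet> r2 \<noteq> 0 \<and> dec x f \<and> dec (refl f \<circ> x) r2
     \<and> dec (refl r2 \<circ> (refl f \<circ> x)) r3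
     \<and> refl r3 \<circ> (refl r2 \<circ> (refl f \<circ> x)) = refl c \<circ> (refl f \<circ> (refl e \<circ> x))"
proof -
  define X where "X = inv x"
  have eP: "e \<in> \<Phi>" and fP: "f \<in> \<Phi>" and cP: "c \<in> \<Phi>" using e f c P_root by auto
  have en: "e \<noteq> 0" and fn: "f \<noteq> 0" and cn: "c \<noteq> 0" using root_nz eP fP cP by auto
  have Xlin: "linear X" unfolding X_def using Wf_linear[OF Wf_inv[OF Ws_Wf[OF x]]] .
  have comm: "\<And>y. refl e (refl f y) = refl f (refl e y)" using refl_orth_comm[OF ef] .
  have rfe: "refl f e = e" using ef by (simp add: refl_orth)
  have x1: "refl f \<circ> x \<in> Ws" using Ws_refl_comp fP x by blast
  have i1: "inv (refl f \<circ> x) = X \<circ> refl f" unfolding X_def using inv_step[OF x fP] .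
  have d1: "dec x f" using dec_char[OF x f] Xf by simp
  show ?thesis
  proof (cases "refl c e \<in> P \<and> - (inv x \<circ> refl e \<circ> refl f) (refl e c) \<in> P")
    case True
    have d2: "dec (refl f \<circ> x) c"
    proof -
      have "(inv x \<circ> refl e \<circ> refl f) (refl e c) = X (refl f c)"
        unfolding X_def by (simp add: comm refl_refl[OF en])
      then show ?thesis using dec_char[OF x1 c] i1 True by simp
    qed
    have x2: "refl c \<circ> (refl f \<circ> x) \<in> Ws" using Ws_refl_comp cP x1 by blast
    have i2: "inv (refl c \<circ> (refl f \<circ> x)) = X \<circ> refl f \<circ> refl c" using inv_step[OF x1 cP] i1 by simp
    have d3: "dec (refl c \<circ> (refl f \<circ> x)) (refl c e)"
    proof -
      have "inv (refl c \<circ> (refl f \<circ> x)) (refl c e) = X e" unfolding i2 by (simp add: refl_refl[OF cn] rfe)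
      then show ?thesis using dec_char[OF x2] True Xe X_def by simp
    qed
    have en2: "refl (refl c e) \<circ> (refl c \<circ> (refl f \<circ> x)) = refl c \<circ> (refl f \<circ> (refl e \<circ> x))"
      using refl_conj_refl[OF cP, of e] by (simp add: fun_eq_iff refl_refl[OF cn] comm)
    show ?thesis using True c fc d1 d2 d3 en2 by blast
  next
    case False
    then have T: "refl e c \<in> P \<and> (inv x \<circ> refl e \<circ> refl f) (refl c e) \<in> P" using G unfolding Gp_def by blast
    have d2: "dec (refl f \<circ> x) (refl e c)"
    proof -
      have "(inv x \<circ> refl e \<circ> refl f) c = X (refl f (refl e c))"
        unfolding X_def by (simp add: comm)
      then show ?thesis using dec_char[OF x1 conjunct1[OF T]] i1 Zc by simp
    qed
    have rec: "refl e c \<in> \<Phi>" using refl_closed eP cP by blast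
    have x2: "refl (refl e c) \<circ> (refl f \<circ> x) \<in> Ws" using Ws_refl_comp[OF rec x1] .
    have i2: "inv (refl (refl e c) \<circ> (refl f \<circ> x)) = X \<circ> refl f \<circ> (refl e \<circ> refl c \<circ> refl e)"
      using inv_step[OF x1 rec] i1 refl_conj_refl[OF eP, of c] by simp
    have d3: "dec (refl (refl e c) \<circ> (refl f \<circ> x)) e"
    proof -
      have "inv (refl (refl e c) \<circ> (refl f \<circ> x)) e = X (refl f (refl e (refl c (- e))))"
        unfolding i2 by (simp add: refl_self[OF en])
      also have "\<dots> = - X (refl f (refl e (refl c e)))"
        by (simp add: refl_neg_arg linear_neg[OF Xlin])
      also have "\<dots> = - (inv x \<circ> refl e \<circ> refl f) (refl c e)" unfolding X_def by (simp add: comm)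
      finally show ?thesis using dec_char[OF x2 e] T by simp
    qed
    have en2: "refl e \<circ> (refl (refl e c) \<circ> (refl f \<circ> x)) = refl c \<circ> (refl f \<circ> (refl e \<circ> x))"
      using refl_conj_refl[OF eP, of c] by (simp add: fun_eq_iff refl_refl[OF en] comm)
    have "f \<bullet> refl e c = f \<bullet> c" using ef by (simp add: refl_def inner_diff_right inner_commute)
    then have fr: "f \<bullet> refl e c \<noteq> 0" using fc by simp
    show ?thesis using T e fr d1 d2 d3 en2 by blast
  qed
qed

lemma T_dec:
  assumes x: "x \<in> Ws" and a: "a \<in> P" and b: "b \<in> P" and c: "c \<in> P"
    and ab: "a \<bullet> b = 0" and bc: "b \<bullet> c \<noteq> 0"
    and d1: "dec x a" and d2: "dec (refl a \<circ> x) b" and d3: "dec (refl b \<circ> (refl a \<circ> x)) c"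
  shows "\<exists>r1 r2 r3. r1 \<in> P \<and> r2 \<in> P \<and> r3 \<in> P \<and> r1 \<bullet> r2 \<noteq> 0 \<and> dec x r1 \<and> dec (refl r1 \<circ> x) r2
     \<and> dec (refl r2 \<circ> (refl r1 \<circ> x)) r3
     \<and> refl r3 \<circ> (refl r2 \<circ> (refl r1 \<circ> x)) = refl c \<circ> (refl b \<circ> (refl a \<circ> x))"
proof -
  define X where "X = inv x"
  have aP: "a \<in> \<Phi>" and bP: "b \<in> \<Phi>" and cP: "c \<in> \<Phi>" using a b c P_root by auto
  have an: "a \<noteq> 0" and bn: "b \<noteq> 0" using root_nz aP bP by auto
  have XW: "X \<in> Wf" unfolding X_def using Wf_inv[OF Ws_Wf[OF x]] .
  have Xlin: "linear X" using Wf_linear[OF XW] .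
  have comm: "\<And>y. refl a (refl b y) = refl b (refl a y)" using refl_orth_comm[OF ab] .
  have rab: "refl a b = b" using ab by (simp add: refl_orth inner_commute)
  have rba: "refl b a = a" using ab by (simp add: refl_orth)
  have xa: "refl a \<circ> x \<in> Ws" using Ws_refl_comp aP x by blast
  have xab: "refl b \<circ> (refl a \<circ> x) \<in> Ws" using Ws_refl_comp bP xa by blast
  have Xa: "- X a \<in> P" using dec_char[OF x a] d1 X_def by simp
  have Xb: "- X b \<in> P" using dec_char[OF xa b] d2 inv_step[OF x aP] rab X_def by simp
  define Z where "Z = X \<circ> refl a \<circ> refl b"
  have ZW: "Z \<in> Wf" unfolding Z_def using Wf_comp XW Wf_refl aP bP by metis
  have iab: "inv (refl b \<circ> (refl a \<circ> x)) = Z" unfolding Z_def X_def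
    using inv_step[OF xa bP] inv_step[OF x aP] by (simp add: comp_assoc)
  have Zc: "- Z c \<in> P" using dec_char[OF xab c] d3 iab by simp
  have Za: "Z a \<in> P" using Xa unfolding Z_def by (simp add: rba refl_self[OF an] linear_neg[OF Xlin])
  have Zb: "Z b \<in> P" using Xb unfolding Z_def by (simp add: refl_self[OF bn] rab linear_neg[OF Xlin] refl_neg_arg)
  have Z': "Z = inv x \<circ> refl b \<circ> refl a" unfolding Z_def X_def by (simp add: fun_eq_iff comm)
  have "Gp Z c a \<or> (a \<bullet> c \<noteq> 0 \<and> Gp Z c b)" using TG[OF ZW a b c ab bc Za Zb Zc] .
  then show ?thesis
  proof
    assume G: "Gp Z c a"
    have "\<exists>r2 r3. r2 \<in> P \<and> r3 \<in> P \<and> b \<bullet> r2 \<noteq> 0 \<and> dec x b \<and> dec (refl b \<circ> x) r2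
     \<and> dec (refl r2 \<circ> (refl b \<circ> x)) r3
     \<and> refl r3 \<circ> (refl r2 \<circ> (refl b \<circ> x)) = refl c \<circ> (refl b \<circ> (refl a \<circ> x))"
      by (rule cand[OF x a b c ab bc]) (use Xa Xb Zc G in \<open>simp_all add: X_def Z_def\<close>)
    then show ?thesis using b by blast
  next
    assume G: "a \<bullet> c \<noteq> 0 \<and> Gp Z c b"
    have ba: "b \<bullet> a = 0" using ab by (simp add: inner_commute)
    have "\<exists>r2 r3. r2 \<in> P \<and> r3 \<in> P \<and> a \<bullet> r2 \<noteq> 0 \<and> dec x a \<and> dec (refl a \<circ> x) r2
     \<and> dec (refl r2 \<circ> (refl a \<circ> x)) r3
     \<and> refl r3 \<circ> (refl r2 \<circ> (refl a \<circ> x)) = refl c \<circ> (refl a \<circ> (refl b \<circ> x))"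
      by (rule cand[OF x b a c ba]) (use Xa Xb Zc G Z' in \<open>simp_all add: X_def\<close>)
    moreover have "refl c \<circ> (refl a \<circ> (refl b \<circ> x)) = refl c \<circ> (refl b \<circ> (refl a \<circ> x))"
      by (simp add: fun_eq_iff comm)
    ultimately show ?thesis using a by metis
  qed
qed

end


context RS begin

fun ch :: "('a \<Rightarrow> 'a) \<Rightarrow> 'a list \<Rightarrow> bool" where
  "ch u [] = True"
| "ch u (r # rs) = (r \<in> P \<and> len (refl r \<circ> u) + 1 = len u \<and> ch (refl r \<circ> u) rs)"

fun endp :: "('a \<Rightarrow> 'a) \<Rightarrow> 'a list \<Rightarrow> ('a \<Rightarrow> 'a)" where
  "endp u [] = u"
| "endp u (r # rs) = endp (refl r \<circ> u) rs"

lemma ch_append: "ch u (xs @ ys) \<longleftrightarrow> ch u xs \<and> ch (endp u xs) ys"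
  by (induction xs arbitrary: u) auto

lemma endp_append: "endp u (xs @ ys) = endp (endp u xs) ys"
  by (induction xs arbitrary: u) auto

lemma endp_Ws: "u \<in> Ws \<Longrightarrow> ch u xs \<Longrightarrow> endp u xs \<in> Ws"
  by (induction xs arbitrary: u) (auto intro: Ws_refl_comp P_root)

lemma ch_swap:
  assumes u: "u \<in> Ws" and ch: "ch u (a # b # rs)" and ab: "a \<bullet> b = 0"
  shows "ch u (b # a # rs) \<and> endp u (b # a # rs) = endp u (a # b # rs)"
proof -
  have a: "a \<in> P" and b: "b \<in> P" and l1: "len (refl a \<circ> u) + 1 = len u"
    and l2: "len (refl b \<circ> (refl a \<circ> u)) + 1 = len (refl a \<circ> u)"
    and rest: "ch (refl b \<circ> (refl a \<circ> u)) rs" using ch by auto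
  have ua: "refl a \<circ> u \<in> Ws" using Ws_refl_comp P_root a u by blast
  have d1: "dec u a" and d2: "dec (refl a \<circ> u) b" using l1 l2 by (auto simp: dec_def)
  note sw = swap_dec[OF u a b ab d1 d2]
  have "len (refl b \<circ> u) < len u" using sw(1) by (simp add: dec_def)
  moreover have "len (refl a \<circ> (refl b \<circ> u)) < len (refl b \<circ> u)" using sw(2) by (simp add: dec_def)
  moreover have e: "refl a \<circ> (refl b \<circ> u) = refl b \<circ> (refl a \<circ> u)" using sw(3) .
  ultimately have "len (refl b \<circ> u) + 1 = len u" "len (refl a \<circ> (refl b \<circ> u)) + 1 = len (refl b \<circ> u)"
    using l1 l2 by auto
  then show ?thesis using a b rest e by simp
qed

lemma ch_T:
  assumes u: "u \<in> Ws" and ch: "ch u (a # b # c # rs)" and ab: "a \<bullet> b = 0" and bc: "b \<bullet> c \<noteq> 0"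
  shows "\<exists>r1 r2 r3. r1 \<bullet> r2 \<noteq> 0 \<and> ch u (r1 # r2 # r3 # rs) \<and> endp u (r1 # r2 # r3 # rs) = endp u (a # b # c # rs)"
proof -
  have a: "a \<in> P" and b: "b \<in> P" and c: "c \<in> P" and l1: "len (refl a \<circ> u) + 1 = len u"
    and l2: "len (refl b \<circ> (refl a \<circ> u)) + 1 = len (refl a \<circ> u)"
    and l3: "len (refl c \<circ> (refl b \<circ> (refl a \<circ> u))) + 1 = len (refl b \<circ> (refl a \<circ> u))"
    and rest: "ch (refl c \<circ> (refl b \<circ> (refl a \<circ> u))) rs" using ch by auto
  have d1: "dec u a" and d2: "dec (refl a \<circ> u) b" and d3: "dec (refl b \<circ> (refl a \<circ> u)) c"
    using l1 l2 l3 by (auto simp: dec_def)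
  obtain r1 r2 r3 where r: "r1 \<in> P" "r2 \<in> P" "r3 \<in> P" "r1 \<bullet> r2 \<noteq> 0" "dec u r1" "dec (refl r1 \<circ> u) r2"
     "dec (refl r2 \<circ> (refl r1 \<circ> u)) r3"
     "refl r3 \<circ> (refl r2 \<circ> (refl r1 \<circ> u)) = refl c \<circ> (refl b \<circ> (refl a \<circ> u))"
    using T_dec[OF u a b c ab bc d1 d2 d3] by blast
  have "len (refl r1 \<circ> u) < len u" "len (refl r2 \<circ> (refl r1 \<circ> u)) < len (refl r1 \<circ> u)"
    "len (refl r3 \<circ> (refl r2 \<circ> (refl r1 \<circ> u))) < len (refl r2 \<circ> (refl r1 \<circ> u))"
    using r(5,6,7) by (auto simp: dec_def)
  then have "len (refl r1 \<circ> u) + 1 = len u" "len (refl r2 \<circ> (refl r1 \<circ> u)) + 1 = len (refl r1 \<circ> u)"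
    "len (refl r3 \<circ> (refl r2 \<circ> (refl r1 \<circ> u))) + 1 = len (refl r2 \<circ> (refl r1 \<circ> u))"
    using l1 l2 l3 r(8) by auto
  then have "ch u (r1 # r2 # r3 # rs)" using r rest by simp
  moreover have "endp u (r1 # r2 # r3 # rs) = endp u (a # b # c # rs)" using r(8) by simp
  ultimately show ?thesis using r(4) by blast
qed

lemma ch_move:
  assumes "u \<in> Ws" "ch u (xs @ [q])" "\<forall>y\<in>set xs. y \<bullet> q = 0"
  shows "ch u (q # xs) \<and> endp u (q # xs) = endp u (xs @ [q])"
  using assms
proof (induction xs arbitrary: u)
  case Nil then show ?case by simp
next
  case (Cons y ys)
  have y: "y \<in> P" and ch': "ch (refl y \<circ> u) (ys @ [q])" using Cons.prems by auto
  have uy: "refl y \<circ> u \<in> Ws" using Ws_refl_comp P_root y Cons.prems(1) by blast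
  have o: "\<forall>y\<in>set ys. y \<bullet> q = 0" using Cons.prems(3) by simp
  have IH: "ch (refl y \<circ> u) (q # ys) \<and> endp (refl y \<circ> u) (q # ys) = endp (refl y \<circ> u) (ys @ [q])"
    by (rule Cons.IH[OF uy ch' o])
  have "ch u (y # q # ys)" using IH Cons.prems(2) by simp
  from ch_swap[OF Cons.prems(1) this] Cons.prems(3)
  have "ch u (q # y # ys) \<and> endp u (q # y # ys) = endp u (y # q # ys)" by simp
  then show ?case using IH by simp
qed

definition haspair :: "'a list \<Rightarrow> bool" where
  "haspair rs \<longleftrightarrow> (\<exists>i j. i < j \<and> j < length rs \<and> rs ! i \<bullet> rs ! j \<noteq> 0)"

lemma main_list:
  assumes "u \<in> Ws" "ch u rs" "haspair rs"
  shows "\<exists>rs'. length rs' = length rs \<and> ch u rs' \<and> endp u rs' = endp u rs \<and> rs' ! 0 \<bullet> rs' ! 1 \<noteq> 0"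
  using assms
proof (induction rs arbitrary: u)
  case Nil then show ?case by (simp add: haspair_def)
next
  case (Cons r rest)
  have r: "r \<in> P" and l: "len (refl r \<circ> u) + 1 = len u" and chr: "ch (refl r \<circ> u) rest"
    using Cons.prems by auto
  have ur: "refl r \<circ> u \<in> Ws" using Ws_refl_comp P_root r Cons.prems(1) by blast
  show ?case
  proof (cases "haspair rest")
    case True
    obtain rest' where R: "length rest' = length rest" "ch (refl r \<circ> u) rest'"
      "endp (refl r \<circ> u) rest' = endp (refl r \<circ> u) rest" "rest' ! 0 \<bullet> rest' ! 1 \<noteq> 0"
      using Cons.IH[OF ur chr True] by blast
    have "length rest \<ge> 2" using True by (auto simp: haspair_def)
    then obtain q1 q2 rest'' where rr: "rest' = q1 # q2 # rest''" using R(1)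
      by (metis One_nat_def Suc_1 Suc_le_length_iff)
    have q12: "q1 \<bullet> q2 \<noteq> 0" using R(4) rr by simp
    have chn: "ch u (r # rest')" using r l R(2) by simp
    show ?thesis
    proof (cases "r \<bullet> q1 = 0")
      case False
      then show ?thesis using chn R rr by (intro exI[of _ "r # rest'"]) simp
    next
      case True
      obtain r1 r2 r3 where "r1 \<bullet> r2 \<noteq> 0" "ch u (r1 # r2 # r3 # rest'')"
        "endp u (r1 # r2 # r3 # rest'') = endp u (r # q1 # q2 # rest'')"
        using ch_T[OF Cons.prems(1) _ True q12] chn rr by blast
      then show ?thesis using R rr by (intro exI[of _ "r1 # r2 # r3 # rest''"]) simp
    qed
  next
    case False
    then have orth: "\<And>i j. i < j \<Longrightarrow> j < length rest \<Longrightarrow> rest ! i \<bullet> rest ! j = 0"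
      by (auto simp: haspair_def)
    obtain i j where ij: "i < j" "j < length (r # rest)" "(r # rest) ! i \<bullet> (r # rest) ! j \<noteq> 0"
      using Cons.prems(3) by (auto simp: haspair_def)
    have i0: "i = 0"
    proof (rule ccontr)
      assume "i \<noteq> 0"
      then have "rest ! (i - 1) \<bullet> rest ! (j - 1) \<noteq> 0" using ij by (cases i; cases j) auto
      moreover have "i - 1 < j - 1" "j - 1 < length rest" using ij \<open>i \<noteq> 0\<close> by auto
      ultimately show False using orth by blast
    qed
    define k where "k = j - 1"
    have k: "k < length rest" "r \<bullet> rest ! k \<noteq> 0" using ij i0 unfolding k_def by (cases j; auto)+
    define q where "q = rest ! k"
    define xs where "xs = take k rest"
    define ys where "ys = drop (Suc k) rest"
    have split: "rest = xs @ [q] @ ys" unfolding xs_def ys_def q_def using k(1)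
      by (simp add: id_take_nth_drop)
    have oq: "\<forall>y\<in>set xs. y \<bullet> q = 0"
    proof
      fix y assume "y \<in> set xs"
      then obtain i' where "i' < length xs" "y = xs ! i'" by (auto simp: in_set_conv_nth)
      then have "i' < k" "y = rest ! i'" unfolding xs_def using k(1) by auto
      then show "y \<bullet> q = 0" unfolding q_def using orth k(1) by blast
    qed
    have ch1: "ch (refl r \<circ> u) (xs @ [q])" and ch2: "ch (endp (refl r \<circ> u) (xs @ [q])) ys"
      using chr split ch_append[of _ "xs @ [q]" ys] by auto
    have mv: "ch (refl r \<circ> u) (q # xs) \<and> endp (refl r \<circ> u) (q # xs) = endp (refl r \<circ> u) (xs @ [q])"
      using ch_move[OF ur ch1 oq] .
    define rs' where "rs' = r # q # xs @ ys"
    have e3: "ch (endp (refl r \<circ> u) (q # xs)) ys" using mv ch2 by metis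
    have c3: "ch (refl r \<circ> u) ((q # xs) @ ys)"
      by (subst ch_append) (use mv e3 in blast)
    have "ch u (r # ((q # xs) @ ys))" by (subst ch.simps(2)) (use r l c3 in blast)
    then have "ch u rs'" unfolding rs'_def by simp
    moreover have "endp u rs' = endp u (r # rest)"
    proof -
      have "endp u rs' = endp (refl r \<circ> u) ((q # xs) @ ys)" unfolding rs'_def by simp
      also have "\<dots> = endp (endp (refl r \<circ> u) (q # xs)) ys" by (rule endp_append)
      also have "\<dots> = endp (endp (refl r \<circ> u) (xs @ [q])) ys" using mv by metis
      also have "\<dots> = endp (refl r \<circ> u) ((xs @ [q]) @ ys)" by (rule endp_append[symmetric])
      also have "\<dots> = endp (refl r \<circ> u) rest" using split by simp
      finally show ?thesis by simp
    qed
    moreover have "length rs' = length (r # rest)" unfolding rs'_def by (subst split) simp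
    moreover have "rs' ! 0 \<bullet> rs' ! 1 \<noteq> 0" unfolding rs'_def q_def using k(2) by simp
    ultimately show ?thesis by blast
  qed
qed

end


context RS begin

lemma endp_map: "endp u (map \<beta> [1..<Suc k]) = refl_prod \<beta> k \<circ> u"
proof (induction k)
  case 0 then show ?case by simp
next
  case (Suc k)
  have "map \<beta> [1..<Suc (Suc k)] = map \<beta> [1..<Suc k] @ [\<beta> (Suc k)]" by simp
  then show ?case using Suc by (simp add: endp_append comp_assoc)
qed

lemma chain_iff:
  "ch w (map \<beta> [1..<Suc m]) \<longleftrightarrow> (\<forall>i\<in>{1..m}. \<beta> i \<in> P \<and> len (refl_prod \<beta> i \<circ> w) + i = len w)"
proof (induction m)
  case 0 then show ?case by simp
next
  case (Suc m)
  have L: "map \<beta> [1..<Suc (Suc m)] = map \<beta> [1..<Suc m] @ [\<beta> (Suc m)]" by simp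
  have "ch w (map \<beta> [1..<Suc (Suc m)]) \<longleftrightarrow> ch w (map \<beta> [1..<Suc m]) \<and>
      \<beta> (Suc m) \<in> P \<and> len (refl_prod \<beta> (Suc m) \<circ> w) + 1 = len (refl_prod \<beta> m \<circ> w)"
    unfolding L ch_append endp_map by (simp add: comp_assoc)
  also have "\<dots> \<longleftrightarrow> (\<forall>i\<in>{1..m}. \<beta> i \<in> P \<and> len (refl_prod \<beta> i \<circ> w) + i = len w) \<and>
      \<beta> (Suc m) \<in> P \<and> len (refl_prod \<beta> (Suc m) \<circ> w) + 1 = len (refl_prod \<beta> m \<circ> w)"
    by (simp only: Suc.IH)
  also have "\<dots> \<longleftrightarrow> (\<forall>i\<in>{1..Suc m}. \<beta> i \<in> P \<and> len (refl_prod \<beta> i \<circ> w) + i = len w)"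
  proof -
    have cum: "len (refl_prod \<beta> m \<circ> w) + m = len w"
      if "\<forall>i\<in>{1..m}. \<beta> i \<in> P \<and> len (refl_prod \<beta> i \<circ> w) + i = len w"
    proof (cases "m = 0")
      case True then show ?thesis by simp
    next
      case False then have "m \<in> {1..m}" by simp
      then show ?thesis using that by blast
    qed
    have "{1..Suc m} = insert (Suc m) {1..m}" by auto
    then show ?thesis using cum by auto
  qed
  finally show ?case .
qed

end

theorem mainTheorem20:
  fixes \<Phi> \<Delta> :: "'a::euclidean_space set"
    and w :: "'a \<Rightarrow> 'a" and \<beta> :: "nat \<Rightarrow> 'a" and m :: nat
  assumes "root_system \<Phi>" and "is_base \<Phi> \<Delta>"
    and "w \<in> weyl_group \<Phi>"
    and "\<forall>i\<in>{1..m}. \<beta> i \<in> pos_roots \<Phi> \<Delta>"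
    and "\<forall>i\<in>{1..m}. int (weyl_length \<Delta> (refl_prod \<beta> i \<circ> w)) = int (weyl_length \<Delta> w) - int i"
    and "\<exists>i\<in>{1..m}. \<exists>j\<in>{1..m}. i \<noteq> j \<and> \<beta> i \<bullet> \<beta> j \<noteq> 0"
  shows "\<exists>\<gamma> :: nat \<Rightarrow> 'a.
           (\<forall>i\<in>{1..m}. \<gamma> i \<in> pos_roots \<Phi> \<Delta>)
         \<and> (\<forall>i\<in>{1..m}. int (weyl_length \<Delta> (refl_prod \<gamma> i \<circ> w)) = int (weyl_length \<Delta> w) - int i)
         \<and> refl_prod \<gamma> m \<circ> w = refl_prod \<beta> m \<circ> w
         \<and> \<gamma> 1 \<bullet> \<gamma> 2 \<noteq> 0"
proof -
  interpret RS \<Phi> \<Delta> using assms(1,2) by unfold_locales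
  have wW: "w \<in> Ws" using weyl_Ws[OF assms(3)] .
  define rs where "rs = map \<beta> [1..<Suc m]"
  have H: "\<forall>i\<in>{1..m}. \<beta> i \<in> pos_roots \<Phi> \<Delta> \<and> weyl_length \<Delta> (refl_prod \<beta> i \<circ> w) + i = weyl_length \<Delta> w"
    using assms(4,5) by fastforce
  have chrs: "ch w rs" unfolding rs_def using chain_iff H by blast
  have nth_rs: "rs ! (i - 1) = \<beta> i" if "i \<in> {1..m}" for i
    unfolding rs_def using that by (auto simp: nth_map nth_upt simp del: upt_Suc)
  have lrs: "length rs = m" unfolding rs_def by simp
  have hp: "haspair rs"
  proof -
    obtain i j where ij: "i \<in> {1..m}" "j \<in> {1..m}" "i \<noteq> j" "\<beta> i \<bullet> \<beta> j \<noteq> 0" using assms(6) by blast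
    show ?thesis
    proof (cases "i < j")
      case True
      then show ?thesis unfolding haspair_def using ij nth_rs lrs
        by (intro exI[of _ "i - 1"] exI[of _ "j - 1"]) auto
    next
      case False
      then have "j < i" using ij by auto
      then show ?thesis unfolding haspair_def using ij nth_rs lrs
        by (intro exI[of _ "j - 1"] exI[of _ "i - 1"]) (auto simp: inner_commute)
    qed
  qed
  obtain rs' where R: "length rs' = length rs" "ch w rs'" "endp w rs' = endp w rs" "rs' ! 0 \<bullet> rs' ! 1 \<noteq> 0"
    using main_list[OF wW chrs hp] by blast
  define \<gamma> where "\<gamma> = (\<lambda>i. rs' ! (i - 1))"
  have mg: "map \<gamma> [1..<Suc m] = rs'"
    by (rule nth_equalityI) (auto simp: \<gamma>_def R(1) lrs nth_map nth_upt simp del: upt_Suc)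
  have G: "\<forall>i\<in>{1..m}. \<gamma> i \<in> pos_roots \<Phi> \<Delta> \<and> weyl_length \<Delta> (refl_prod \<gamma> i \<circ> w) + i = weyl_length \<Delta> w"
    using chain_iff[of w \<gamma> m] R(2) mg by simp
  have E: "refl_prod \<gamma> m \<circ> w = refl_prod \<beta> m \<circ> w"
    using R(3) endp_map[of w \<gamma> m] endp_map[of w \<beta> m] mg rs_def by simp
  have g12: "\<gamma> 1 \<bullet> \<gamma> 2 \<noteq> 0" unfolding \<gamma>_def using R(4) by simp
  show ?thesis
    by (rule exI[of _ \<gamma>]) (use G E g12 in force)
qed


end
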